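(* Let $p>1$ and let $A$ be a complex $r$-matrix of order $n_1\times\cdots\times n_r$. Then \[ \|A\|_p\leq|A|_{p/(p-1)}, \] and equality holds if and only if $A$ is a rank-one matrix.
   Context: An $r$-matrix of order $n_1\times\cdots\times n_r$ is a function on $[n_1]\times\cdots\times[n_r]$ with values $a_{i_1,\ldots,i_r}$. $|A|_q=(\sum|a_{i_1,\ldots,i_r}|^q)^{1/q}$ is the entrywise $\ell^q$ norm. The spectral $p$-norm is $\|A\|_p=\max\{|\sum a_{i_1,\ldots,i_r}\overline{x^{(1)}_{i_1}}\cdots\overline{x^{(r)}_{i_r}}|:\mathbf{x}^{(k)}\in\mathbb{C}^{n_k},\ |\mathbf{x}^{(k)}|_p=1\ \forall k\}$. $A$ is rank-one if there are vectors $\mathbf{x}^{(k)}\in\mathbb{C}^{n_k}$ with $a_{i_1,\ldots,i_r}=x^{(1)}_{i_1}\cdots x^{(r)}_{i_r}$ for all indices. *)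

theory Defs
  imports "HOL-Analysis.Analysis"
begin

text \<open>An r-matrix of order n_0 x ... x n_(r-1) (indices shifted to start at 0) is a
  complex-valued function on the index set below: extensional functions i with
  i k < n k for k < r.\<close>

definition rindex :: "nat \<Rightarrow> (nat \<Rightarrow> nat) \<Rightarrow> (nat \<Rightarrow> nat) set" where
  "rindex r n = PiE {..<r} (\<lambda>k. {..<n k})"

definition entry_norm :: "nat \<Rightarrow> (nat \<Rightarrow> nat) \<Rightarrow> real \<Rightarrow> ((nat \<Rightarrow> nat) \<Rightarrow> complex) \<Rightarrow> real" where
  "entry_norm r n q A = (\<Sum>i\<in>rindex r n. cmod (A i) powr q) powr (1 / q)"

definition vec_norm :: "real \<Rightarrow> nat \<Rightarrow> (nat \<Rightarrow> complex) \<Rightarrow> real" where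
  "vec_norm p m v = (\<Sum>j<m. cmod (v j) powr p) powr (1 / p)"

text \<open>Spectral p-norm: the maximum (here: supremum, which is attained) of
  |sum_i a_i conj(x^(1)_{i_1}) ... conj(x^(r)_{i_r})| over l^p unit vectors.\<close>
definition spec_norm :: "nat \<Rightarrow> (nat \<Rightarrow> nat) \<Rightarrow> real \<Rightarrow> ((nat \<Rightarrow> nat) \<Rightarrow> complex) \<Rightarrow> real" where
  "spec_norm r n p A = Sup {cmod (\<Sum>i\<in>rindex r n. A i * (\<Prod>k<r. cnj (x k (i k)))) | x.
      \<forall>k<r. vec_norm p (n k) (x k) = 1}"

definition rank_one :: "nat \<Rightarrow> (nat \<Rightarrow> nat) \<Rightarrow> ((nat \<Rightarrow> nat) \<Rightarrow> complex) \<Rightarrow> bool" where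
  "rank_one r n A \<longleftrightarrow> (\<exists>x :: nat \<Rightarrow> nat \<Rightarrow> complex.
      \<forall>i\<in>rindex r n. A i = (\<Prod>k<r. x k (i k)))"

end

theory Submission
  imports Defs
begin


lemma young_strict:
  fixes t \<alpha> :: real assumes "0<\<alpha>" "\<alpha><1" "t>0" "t\<noteq>1"
  shows "t powr \<alpha> < \<alpha> * t + (1-\<alpha>)"
proof -
  define s where "s = sqrt t"
  have s0: "s > 0" using assms by (simp add: s_def)
  have st: "s  *  s = t" using assms by (simp add: s_def)
  have s1: "s \<noteq> 1" using assms st by auto
  have "s powr \<alpha>  *  1 powr (1-\<alpha>) \<le> \<alpha> * s + (1-\<alpha>) * 1"
    using Youngs_inequality_0[of \<alpha> "1-\<alpha>" s 1] assms s0 by simp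
  hence h1: "s powr \<alpha> \<le> \<alpha> * s + (1-\<alpha>)" by simp
  have "t powr \<alpha> = s powr \<alpha>  *  s powr \<alpha>" using st powr_mult by metis
  also have "\<dots> \<le> (\<alpha> * s + (1-\<alpha>))  *  (\<alpha> * s + (1-\<alpha>))"
    using h1 by (intro mult_mono) (use assms s0 in auto)
  also have "\<dots> < \<alpha> * t + (1-\<alpha>)"
  proof -
    have "\<alpha> * t + (1-\<alpha>) - (\<alpha> * s + (1-\<alpha>))  *  (\<alpha> * s + (1-\<alpha>)) = \<alpha> * (1-\<alpha>) * ((s-1) * (s-1))"
      using st by (simp add: algebra_simps)
    moreover have "(s-1) * (s-1) > 0" using s1 by (smt (verit) mult_pos_pos mult_neg_neg)
    ultimately show ?thesis using assms by (smt (verit) mult_pos_pos)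
  qed
  finally show ?thesis .
qed

lemma young_eq:
  fixes p q a b :: real
  assumes "p>1" "q>1" "1/p+1/q=1" "a\<ge>0" "b\<ge>0"
    and eq: "a * b = a powr p/p + b powr q/q"
  shows "a powr p = b powr q"
proof (rule ccontr)
  assume ne: "a powr p \<noteq> b powr q"
  show False
  proof (cases "a = 0 \<or> b = 0")
    case True
    then show ?thesis using eq ne assms by auto
  next
    case False
    hence a0: "a>0" and b0: "b>0" using assms by auto
    define u where "u = a powr p"
    define v where "v = b powr q"
    have u0: "u>0" and v0: "v>0" using a0 b0 by (auto simp: u_def v_def)
    have au: "a = u powr (1/p)" using a0 assms(1) by (simp add: u_def powr_powr)
    have bv: "b = v powr (1/q)" using b0 assms(2) by (simp add: v_def powr_powr)
    define t where "t = u/v"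
    have t0: "t > 0" using u0 v0 by (simp add: t_def)
    have t1: "t \<noteq> 1" using ne u0 v0 by (auto simp: t_def u_def v_def)
    have utv: "u = t  *  v" using v0 by (simp add: t_def)
    have q1: "1/q = 1 - 1/p" using assms(3) by simp
    have "a * b = (t * v) powr (1/p)  *  v powr (1 - 1/p)" using au bv utv q1 by simp
    also have "\<dots> = t powr (1/p)  *  (v powr (1/p)  *  v powr (1 - 1/p))"
      by (simp add: powr_mult)
    also have "v powr (1/p)  *  v powr (1 - 1/p) = v"
      using v0 by (simp flip: powr_add)
    also have "t powr (1/p)  *  v < ((1/p) * t + (1 - 1/p))  *  v"
      using young_strict[of "1/p" t] assms t0 t1 v0 by simp
    also have "\<dots> = u/p + v/q"
    proof -
      have "v/p + v/q = v * (1/p+1/q)" by (simp add: algebra_simps)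
      also have "\<dots> = v" using assms(3) by simp
      finally have vv: "v/p + v/q = v" .
      show ?thesis using utv vv by (simp add: algebra_simps)
    qed
    finally show False using eq by (simp add: u_def v_def)
  qed
qed



lemma holder_young:
  fixes a b :: "'i \<Rightarrow> real" and p q :: real
  assumes fin: "finite I" and pq: "p>1" "q>1" "1/p+1/q=1"
    and a0: "\<forall>i\<in>I. a i \<ge> 0" and b0: "\<forall>i\<in>I. b i \<ge> 0"
    and bs: "(\<Sum>i\<in>I. b i powr p) = 1"
  defines "K \<equiv> (\<Sum>i\<in>I. a i powr q) powr (1/q)"
  shows "(\<Sum>i\<in>I. a i * b i) \<le> K"
    and "(\<Sum>i\<in>I. a i * b i) = K \<Longrightarrow> K > 0 \<Longrightarrow> \<forall>i\<in>I. (a i / K) powr q = b i powr p"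
proof -
  define S where "S = (\<Sum>i\<in>I. a i powr q)"
  have S0: "S \<ge> 0" by (simp add: S_def sum_nonneg)
  have KS: "K = S powr (1/q)" by (simp add: K_def S_def)
  have main: "K > 0 \<Longrightarrow> (\<Sum>i\<in>I. a i * b i) \<le> K \<and>
     ((\<Sum>i\<in>I. a i * b i) = K \<longrightarrow> (\<forall>i\<in>I. (a i / K) powr q = b i powr p))"
  proof -
    assume K0: "K > 0"
    have Sp: "S > 0" using K0 S0 KS by (cases "S = 0") auto
    have KqS: "K powr q = S" using KS Sp pq by (simp add: powr_powr)
    define R where "R i = (a i / K) powr q / q + b i powr p / p" for i
    have Y: "\<forall>i\<in>I. a i / K * b i \<le> R i"
    proof
      fix i assume i: "i \<in> I"
      have "1/q + 1/p = 1" using pq by simp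
      thus "a i / K * b i \<le> R i" unfolding R_def
        by (intro Youngs_inequality) (use pq a0 b0 K0 i in auto)
    qed
    have "(\<Sum>i\<in>I. R i) = (\<Sum>i\<in>I. a i powr q) / S / q + (\<Sum>i\<in>I. b i powr p) / p"
      using a0 K0 KqS
      by (simp add: R_def sum.distrib powr_divide sum_divide_distrib)
    also have "\<dots> = 1" using Sp pq bs by (simp add: S_def[symmetric])
    finally have R1: "(\<Sum>i\<in>I. R i) = 1" .
    have sumd: "(\<Sum>i\<in>I. a i / K * b i) = (\<Sum>i\<in>I. a i * b i) / K"
      by (simp add: sum_divide_distrib)
    have "(\<Sum>i\<in>I. a i / K * b i) \<le> (\<Sum>i\<in>I. R i)" using Y by (intro sum_mono) auto
    hence le1: "(\<Sum>i\<in>I. a i / K * b i) \<le> 1" using R1 by simp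
    have "(\<Sum>i\<in>I. a i * b i) \<le> K" using le1 sumd K0 by (simp add: divide_le_eq)
    moreover have "(\<Sum>i\<in>I. a i * b i) = K \<longrightarrow> (\<forall>i\<in>I. (a i / K) powr q = b i powr p)"
    proof
      assume eq: "(\<Sum>i\<in>I. a i * b i) = K"
      have e1: "(\<Sum>i\<in>I. a i / K * b i) = 1" using eq sumd K0 by simp
      have allEq: "\<forall>i\<in>I. a i / K * b i = R i"
      proof (rule ccontr)
        assume "\<not> (\<forall>i\<in>I. a i / K * b i = R i)"
        then obtain j where "j \<in> I" "a j / K * b j < R j" using Y by force
        hence "(\<Sum>i\<in>I. a i / K * b i) < (\<Sum>i\<in>I. R i)"
          using Y fin by (intro sum_strict_mono_ex1) auto
        thus False using e1 R1 by simp
      qed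
      show "\<forall>i\<in>I. (a i / K) powr q = b i powr p"
      proof
        fix i assume "i \<in> I"
        thus "(a i / K) powr q = b i powr p"
          using young_eq[of q p "a i / K" "b i"] allEq pq a0 b0 K0
          by (simp add: R_def add.commute)
      qed
    qed
    ultimately show ?thesis by blast
  qed
  show "(\<Sum>i\<in>I. a i * b i) \<le> K"
  proof (cases "K > 0")
    case True then show ?thesis using main by blast
  next
    case False
    hence "S = 0" using KS S0 by (cases "S = 0") auto
    hence "\<forall>i\<in>I. a i powr q = 0" using fin by (simp add: S_def sum_nonneg_eq_0_iff)
    hence "\<forall>i\<in>I. a i = 0" by simp
    thus ?thesis by (simp add: KS)
  qed
  show "(\<Sum>i\<in>I. a i * b i) = K \<Longrightarrow> K > 0 \<Longrightarrow> \<forall>i\<in>I. (a i / K) powr q = b i powr p"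
    using main by blast
qed

lemma phase_align:
  fixes z :: "'i \<Rightarrow> complex"
  assumes fin: "finite I" and eq: "cmod (\<Sum>i\<in>I. z i) = (\<Sum>i\<in>I. cmod (z i))"
    and nz: "(\<Sum>i\<in>I. z i) \<noteq> 0"
  shows "\<exists>w. cmod w = 1 \<and> (\<forall>i\<in>I. z i = w * complex_of_real (cmod (z i)))"
proof -
  define S where "S = (\<Sum>i\<in>I. z i)"
  define w where "w = S / complex_of_real (cmod S)"
  have Sn: "cmod S > 0" using nz by (simp add: S_def)
  have w1: "cmod w = 1" using Sn by (simp add: w_def norm_divide)
  have le: "\<forall>i\<in>I. Re (cnj w * z i) \<le> cmod (z i)"
  proof
    fix i
    have "Re (cnj w * z i) \<le> cmod (cnj w * z i)" by (rule complex_Re_le_cmod)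
    also have "\<dots> = cmod (z i)" using w1 by (simp add: norm_mult)
    finally show "Re (cnj w * z i) \<le> cmod (z i)" .
  qed
  have "(\<Sum>i\<in>I. Re (cnj w * z i)) = Re (cnj w * S)"
    by (simp add: S_def sum_distrib_left)
  also have "cnj w * S = complex_of_real (cmod S)"
  proof -
    have "cnj w * S = (S * cnj S) / complex_of_real (cmod S)" by (simp add: w_def)
    also have "S * cnj S = complex_of_real (cmod S) * complex_of_real (cmod S)"
      using complex_norm_square[of S] by (simp only: power2_eq_square of_real_mult)
    finally show ?thesis using Sn by simp
  qed
  finally have "(\<Sum>i\<in>I. Re (cnj w * z i)) = (\<Sum>i\<in>I. cmod (z i))"
    using eq by (simp add: S_def)
  hence "(\<Sum>i\<in>I. cmod (z i) - Re (cnj w * z i)) = 0" by (simp add: sum_subtractf)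
  hence "\<forall>i\<in>I. cmod (z i) - Re (cnj w * z i) = 0"
    using le fin by (subst (asm) sum_nonneg_eq_0_iff) auto
  hence re: "\<forall>i\<in>I. Re (cnj w * z i) = cmod (cnj w * z i)"
    using w1 by (simp add: norm_mult)
  have "\<forall>i\<in>I. cnj w * z i = complex_of_real (cmod (z i))"
  proof
    fix i assume i: "i \<in> I"
    define u where "u = cnj w * z i"
    have "Re u = cmod u" using re i by (simp add: u_def)
    hence "(Re u)^2 = (Re u)^2 + (Im u)^2" using cmod_power2[of u] by simp
    hence "Im u = 0" by simp
    hence "u = complex_of_real (cmod u)" using \<open>Re u = cmod u\<close> by (simp add: complex_eq_iff)
    thus "cnj w * z i = complex_of_real (cmod (z i))" using w1 by (simp add: u_def norm_mult)
  qed
  moreover have "w * cnj w = 1" using w1 complex_norm_square[of w] by simp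
  ultimately have "\<forall>i\<in>I. z i = w * complex_of_real (cmod (z i))"
  proof (intro ballI)
    fix i assume i: "i \<in> I"
    assume h: "\<forall>i\<in>I. cnj w * z i = complex_of_real (cmod (z i))" "w * cnj w = 1"
    have "z i = (w * cnj w) * z i" using h by simp
    also have "\<dots> = w * (cnj w * z i)" by (simp add: mult.assoc)
    finally show "z i = w * complex_of_real (cmod (z i))" using h i by simp
  qed
  thus ?thesis using w1 by blast
qed



lemma subseq_multi:
  fixes Y :: "nat \<Rightarrow> 'a \<Rightarrow> complex"
  assumes "finite S" "\<forall>m. \<forall>a\<in>S. cmod (Y m a) \<le> B"
  shows "\<exists>\<sigma> L. strict_mono \<sigma> \<and> (\<forall>a\<in>S. (\<lambda>m. Y (\<sigma> m) a) \<longlonglongrightarrow> L a)"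
  using assms
proof (induction S rule: finite_induct)
  case empty
  show ?case by (rule exI[of _ id]) (auto simp: strict_mono_def)
next
  case (insert a F)
  then obtain \<sigma> L where s: "strict_mono \<sigma>" and L: "\<forall>b\<in>F. (\<lambda>m. Y (\<sigma> m) b) \<longlonglongrightarrow> L b"
    by auto
  have "bounded (range (\<lambda>m. Y (\<sigma> m) a))"
    using insert.prems by (intro boundedI[of _ B]) auto
  then obtain l \<tau> where t: "strict_mono \<tau>" and l: "((\<lambda>m. Y (\<sigma> m) a) \<circ> \<tau>) \<longlonglongrightarrow> l"
    using bounded_imp_convergent_subsequence by blast
  have "strict_mono (\<sigma> \<circ> \<tau>)" using s t by (rule strict_mono_o)
  moreover have "\<forall>b\<in>insert a F. (\<lambda>m. Y ((\<sigma> \<circ> \<tau>) m) b) \<longlonglongrightarrow> (L(a:=l)) b"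
  proof
    fix b assume b: "b \<in> insert a F"
    show "(\<lambda>m. Y ((\<sigma> \<circ> \<tau>) m) b) \<longlonglongrightarrow> (L(a:=l)) b"
    proof (cases "b = a")
      case True then show ?thesis using l by (simp add: o_def)
    next
      case False
      hence "b \<in> F" using b by simp
      hence "((\<lambda>m. Y (\<sigma> m) b) \<circ> \<tau>) \<longlonglongrightarrow> L b" using L t by (intro LIMSEQ_subseq_LIMSEQ) auto
      then show ?thesis using False by (simp add: o_def)
    qed
  qed
  ultimately show ?case by blast
qed

lemma finite_rindex: "finite (rindex r n)"
  by (simp add: rindex_def finite_PiE)

lemma rindex_mem: "i \<in> rindex r n \<Longrightarrow> k < r \<Longrightarrow> i k < n k"
  by (auto simp: rindex_def PiE_iff)

lemma prod_sum_rindex: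
  fixes f :: "nat \<Rightarrow> nat \<Rightarrow> 'a::comm_semiring_1"
  shows "(\<Sum>i\<in>rindex r n. \<Prod>k<r. f k (i k)) = (\<Prod>k<r. \<Sum>j<n k. f k j)"
  unfolding rindex_def by (subst prod_sum_PiE) auto

lemma vec_norm1_sum:
  assumes "p > 0" "vec_norm p m v = 1"
  shows "(\<Sum>j<m. cmod (v j) powr p) = 1"
proof -
  define s where "s = (\<Sum>j<m. cmod (v j) powr p)"
  have s0: "s \<ge> 0" by (simp add: s_def sum_nonneg)
  have e: "s powr (1/p) = 1" using assms by (simp add: vec_norm_def s_def)
  hence "s \<noteq> 0" by auto
  hence "s = (s powr (1/p)) powr p" using s0 assms by (simp add: powr_powr)
  thus ?thesis using e by (simp add: s_def)
qed

lemma vec_norm1_bound: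
  assumes "p > 0" "vec_norm p m v = 1" "j < m"
  shows "cmod (v j) \<le> 1"
proof (rule ccontr)
  assume "\<not> cmod (v j) \<le> 1"
  hence "1 < cmod (v j) powr p" using assms by (intro gr_one_powr) auto
  also have "\<dots> \<le> (\<Sum>j<m. cmod (v j) powr p)"
    using assms by (intro member_le_sum) auto
  finally show False using vec_norm1_sum[OF assms(1,2)] by simp
qed



lemma pq_facts:
  fixes p :: real assumes "p > 1"
  shows "p/(p-1) > 1" "1/p + 1/(p/(p-1)) = 1" "(p/(p-1) - 1) * p = p/(p-1)"
    "p / (p/(p-1)) = p - 1"
  using assms by (auto simp: field_simps)

lemma bsum_one:
  assumes "p > 1" "\<forall>k<r. vec_norm p (n k) (x k) = 1"
  shows "(\<Sum>i\<in>rindex r n. (\<Prod>k<r. cmod (x k (i k))) powr p) = 1"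
proof -
  have "(\<Sum>i\<in>rindex r n. (\<Prod>k<r. cmod (x k (i k))) powr p)
      = (\<Sum>i\<in>rindex r n. \<Prod>k<r. cmod (x k (i k)) powr p)"
    by (simp add: prod_powr_distrib)
  also have "\<dots> = (\<Prod>k<r. \<Sum>j<n k. cmod (x k j) powr p)" by (rule prod_sum_rindex)
  also have "\<dots> = 1" using vec_norm1_sum assms by (intro prod.neutral) auto
  finally show ?thesis .
qed

lemma spec_bound:
  assumes p: "p > 1" and x: "\<forall>k<r. vec_norm p (n k) (x k) = 1"
  shows "cmod (\<Sum>i\<in>rindex r n. A i * (\<Prod>k<r. cnj (x k (i k)))) \<le> entry_norm r n (p/(p-1)) A"
proof -
  define b where "b i = (\<Prod>k<r. cmod (x k (i k)))" for i
  have "cmod (\<Sum>i\<in>rindex r n. A i * (\<Prod>k<r. cnj (x k (i k))))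
     \<le> (\<Sum>i\<in>rindex r n. cmod (A i * (\<Prod>k<r. cnj (x k (i k)))))" by (rule norm_sum)
  also have "\<dots> = (\<Sum>i\<in>rindex r n. cmod (A i) * b i)"
    by (simp add: b_def norm_mult flip: prod_norm)
  also have "\<dots> \<le> entry_norm r n (p/(p-1)) A"
    unfolding entry_norm_def
    using holder_young(1)[OF finite_rindex, where p=p and q="p/(p-1)" and a="\<lambda>i. cmod (A i)" and b=b] pq_facts[OF p] p
      bsum_one[OF p x] by (auto simp: b_def prod_nonneg)
  finally show ?thesis .
qed



lemma exists_unit:
  fixes r :: nat and n :: "nat \<Rightarrow> nat"
  assumes "\<forall>k<r. n k \<ge> 1" "p > 0"
  shows "\<exists>x. \<forall>k<r. vec_norm p (n k) (x k) = 1"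
proof -
  define x :: "nat \<Rightarrow> nat \<Rightarrow> complex" where "x k j = (if j = 0 then 1 else 0)" for k j :: nat
  have "\<forall>k<r. vec_norm p (n k) (x k) = 1"
  proof (intro allI impI)
    fix k assume k: "k < r"
    have "(\<Sum>j<n k. cmod (x k j) powr p) = (\<Sum>j<n k. if j = 0 then 1 else 0)"
      by (intro sum.cong) (auto simp: x_def)
    also have "\<dots> = 1" using assms k by (simp add: sum.delta Suc_le_eq)
    finally show "vec_norm p (n k) (x k) = 1" by (simp add: vec_norm_def)
  qed
  thus ?thesis by blast
qed

definition FF :: "nat \<Rightarrow> (nat \<Rightarrow> nat) \<Rightarrow> ((nat \<Rightarrow> nat) \<Rightarrow> complex) \<Rightarrow> (nat \<Rightarrow> nat \<Rightarrow> complex) \<Rightarrow> real" where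
  "FF r n A x = cmod (\<Sum>i\<in>rindex r n. A i * (\<Prod>k<r. cnj (x k (i k))))"

lemma spec_norm_eq: "spec_norm r n p A = Sup (FF r n A ` {x. \<forall>k<r. vec_norm p (n k) (x k) = 1})"
  unfolding spec_norm_def FF_def by (rule arg_cong[where f=Sup]) auto

lemma spec_facts:
  fixes A :: "(nat \<Rightarrow> nat) \<Rightarrow> complex"
  assumes p: "p > 1" and n: "\<forall>k<r. n k \<ge> 1"
  defines "V \<equiv> FF r n A ` {x. \<forall>k<r. vec_norm p (n k) (x k) = 1}"
  shows "V \<noteq> {}" "bdd_above V" "\<forall>v\<in>V. v \<le> entry_norm r n (p/(p-1)) A"
proof -
  show "V \<noteq> {}" using exists_unit[OF n] p unfolding V_def by auto
  show *: "\<forall>v\<in>V. v \<le> entry_norm r n (p/(p-1)) A"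
    unfolding V_def FF_def using spec_bound[OF p] by auto
  show "bdd_above V" using * by (auto simp: bdd_above_def)
qed

lemma attained:
  assumes p: "p > 1" and n: "\<forall>k<r. n k \<ge> 1"
  shows "\<exists>x. (\<forall>k<r. vec_norm p (n k) (x k) = 1) \<and> FF r n A x = spec_norm r n p A"
proof -
  define U where "U = {x. \<forall>k<r. vec_norm p (n k) (x k) = 1}"
  define V where "V = FF r n A ` U"
  have Vne: "V \<noteq> {}" and Vb: "bdd_above V"
    using spec_facts[OF p n, of A] by (simp_all add: V_def U_def)
  have "\<forall>m. \<exists>x. x \<in> U \<and> Sup V - inverse (real (Suc m)) < FF r n A x"
  proof
    fix m
    have "Sup V - inverse (real (Suc m)) < Sup V" by simp
    then obtain v where "v \<in> V" "Sup V - inverse (real (Suc m)) < v" using Vne by (rule less_cSupE)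
    thus "\<exists>x. x \<in> U \<and> Sup V - inverse (real (Suc m)) < FF r n A x" by (auto simp: V_def)
  qed
  then obtain xs where xsU: "\<forall>m. xs m \<in> U" and xsl: "\<forall>m. Sup V - inverse (real (Suc m)) < FF r n A (xs m)"
    by metis
  have xsu: "\<forall>m. FF r n A (xs m) \<le> Sup V"
    using xsU Vb by (auto simp: V_def intro: cSup_upper)
  have conv: "(\<lambda>m. FF r n A (xs m)) \<longlonglongrightarrow> Sup V"
  proof (rule tendsto_sandwich)
    show "\<forall>\<^sub>F m in sequentially. Sup V - inverse (real (Suc m)) \<le> FF r n A (xs m)"
      using xsl by (simp add: less_imp_le)
    show "\<forall>\<^sub>F m in sequentially. FF r n A (xs m) \<le> Sup V" using xsu by simp
    show "(\<lambda>m. Sup V - inverse (real (Suc m))) \<longlonglongrightarrow> Sup V"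
      using tendsto_diff[OF tendsto_const LIMSEQ_inverse_real_of_nat, of "Sup V"] by simp
  qed simp
  define S where "S = Sigma {..<r} (\<lambda>k. {..<n k})"
  have finS: "finite S" by (simp add: S_def)
  have bnd: "\<forall>m. \<forall>a\<in>S. cmod ((\<lambda>m a. xs m (fst a) (snd a)) m a) \<le> 1"
  proof (intro allI ballI)
    fix m a assume a: "a \<in> S"
    hence "fst a < r" "snd a < n (fst a)" by (auto simp: S_def)
    thus "cmod ((\<lambda>m a. xs m (fst a) (snd a)) m a) \<le> 1"
      using xsU p vec_norm1_bound[of p "n (fst a)" "xs m (fst a)" "snd a"] by (auto simp: U_def)
  qed
  obtain \<sigma> L where sm: "strict_mono \<sigma>"
    and L: "\<forall>a\<in>S. (\<lambda>m. xs (\<sigma> m) (fst a) (snd a)) \<longlonglongrightarrow> L a"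
    using subseq_multi[OF finS bnd] by auto
  define xL where "xL k j = L (k, j)" for k j
  have Lk: "(\<lambda>m. xs (\<sigma> m) k j) \<longlonglongrightarrow> xL k j" if "k < r" "j < n k" for k j
    using L that by (force simp: S_def xL_def)
  have xLU: "\<forall>k<r. vec_norm p (n k) (xL k) = 1"
  proof (intro allI impI)
    fix k assume k: "k < r"
    have "(\<lambda>m. \<Sum>j<n k. cmod (xs (\<sigma> m) k j) powr p) \<longlonglongrightarrow> (\<Sum>j<n k. cmod (xL k j) powr p)"
      using p by (intro tendsto_sum tendsto_powr' tendsto_norm Lk k) auto
    moreover have "(\<lambda>m. \<Sum>j<n k. cmod (xs (\<sigma> m) k j) powr p) = (\<lambda>m. 1)"
      using xsU k p by (auto simp: U_def intro!: vec_norm1_sum)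
    ultimately have "(\<Sum>j<n k. cmod (xL k j) powr p) = 1"
      using LIMSEQ_unique tendsto_const by metis
    thus "vec_norm p (n k) (xL k) = 1" by (simp add: vec_norm_def)
  qed
  have "(\<lambda>m. FF r n A (xs (\<sigma> m))) \<longlonglongrightarrow> FF r n A xL"
    unfolding FF_def
    by (intro tendsto_norm tendsto_sum tendsto_mult tendsto_const tendsto_prod tendsto_cnj Lk)
       (auto intro: rindex_mem)
  moreover have "(\<lambda>m. FF r n A (xs (\<sigma> m))) \<longlonglongrightarrow> Sup V"
    using LIMSEQ_subseq_LIMSEQ[OF conv sm] by (simp add: o_def)
  ultimately have "FF r n A xL = Sup V" by (rule LIMSEQ_unique)
  thus ?thesis using xLU by (auto simp: spec_norm_eq V_def U_def)
qed



lemma sum_absq_rank_one: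
  assumes "\<forall>i\<in>rindex r n. A i = (\<Prod>k<r. y k (i k))"
  shows "(\<Sum>i\<in>rindex r n. cmod (A i) powr q) = (\<Prod>k<r. \<Sum>j<n k. cmod (y k j) powr q)"
proof -
  have "(\<Sum>i\<in>rindex r n. cmod (A i) powr q) = (\<Sum>i\<in>rindex r n. \<Prod>k<r. cmod (y k (i k)) powr q)"
    using assms by (intro sum.cong) (auto simp: prod_powr_distrib simp flip: prod_norm)
  also have "\<dots> = (\<Prod>k<r. \<Sum>j<n k. cmod (y k j) powr q)" by (rule prod_sum_rindex)
  finally show ?thesis .
qed

lemma rank_one_lower:
  assumes p: "p > 1" and n: "\<forall>k<r. n k \<ge> 1" and ro: "rank_one r n A"
  shows "entry_norm r n (p/(p-1)) A \<le> spec_norm r n p A"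
proof -
  define q where "q = p/(p-1)"
  have q1: "q > 1" and pq: "1/p + 1/q = 1" and qp: "(q - 1) * p = q"
    using pq_facts[OF p] by (simp_all add: q_def)
  define U where "U = {x. \<forall>k<r. vec_norm p (n k) (x k) = 1}"
  define V where "V = FF r n A ` U"
  have Vne: "V \<noteq> {}" and Vb: "bdd_above V"
    using spec_facts[OF p n, of A] by (simp_all add: V_def U_def)
  have SV: "spec_norm r n p A = Sup V" by (simp add: spec_norm_eq V_def U_def)
  obtain y where y: "\<forall>i\<in>rindex r n. A i = (\<Prod>k<r. y k (i k))"
    using ro by (auto simp: rank_one_def)
  define c where "c k = (\<Sum>j<n k. cmod (y k j) powr q)" for k
  have c0: "c k \<ge> 0" for k by (simp add: c_def sum_nonneg)
  have K: "entry_norm r n (p/(p-1)) A = (\<Prod>k<r. c k) powr (1/q)"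
    unfolding entry_norm_def using sum_absq_rank_one[OF y, of q] by (simp add: c_def q_def)
  show ?thesis
  proof (cases "(\<Prod>k<r. c k) = 0")
    case True
    obtain v where "v \<in> V" using Vne by auto
    moreover have "v \<ge> 0" using \<open>v \<in> V\<close> by (auto simp: V_def FF_def)
    ultimately have "0 \<le> Sup V" using Vb by (meson cSup_upper order_trans)
    thus ?thesis using K True SV by simp
  next
    case False
    hence cp: "c k > 0" if "k < r" for k using c0 that
      by (metis finite_lessThan lessThan_iff order_le_less prod_zero_iff)
    define N where "N k = c k powr (1/p)" for k
    have Np: "N k > 0" if "k < r" for k using cp[OF that] by (simp add: N_def)
    have NP: "N k powr p = c k" if "k < r" for k
      using cp[OF that] p by (simp add: N_def powr_powr)
    define x where "x k j = y k j * complex_of_real (cmod (y k j) powr (q-2)) / complex_of_real (N k)" for k j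
    have ax: "cmod (x k j) powr p = cmod (y k j) powr q / c k" if "k < r" for k j
    proof (cases "y k j = 0")
      case True then show ?thesis by (simp add: x_def)
    next
      case False
      hence yp: "cmod (y k j) > 0" by simp
      have "cmod (x k j) = cmod (y k j) * cmod (y k j) powr (q-2) / N k"
        using Np[OF that] by (simp add: x_def norm_mult norm_divide)
      also have "cmod (y k j) * cmod (y k j) powr (q-2) = cmod (y k j) powr (q-1)"
      proof -
        have "cmod (y k j) * cmod (y k j) powr (q-2) = cmod (y k j) powr 1 * cmod (y k j) powr (q-2)"
          using yp by simp
        also have "\<dots> = cmod (y k j) powr (1 + (q-2))" by (simp only: powr_add)
        finally show ?thesis by simp
      qed
      finally have "cmod (x k j) powr p = (cmod (y k j) powr (q-1)) powr p / N k powr p"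
        using Np[OF that] by (simp add: powr_divide)
      also have "\<dots> = cmod (y k j) powr q / c k" using qp NP[OF that] by (simp add: powr_powr)
      finally show ?thesis .
    qed
    have bx: "y k j * cnj (x k j) = complex_of_real (cmod (y k j) powr q / N k)" for k j
    proof (cases "y k j = 0")
      case True then show ?thesis using q1 by (simp add: x_def)
    next
      case False
      hence yp: "cmod (y k j) > 0" by simp
      have "y k j * cnj (x k j) = (y k j * cnj (y k j)) * complex_of_real (cmod (y k j) powr (q-2) / N k)"
        by (simp add: x_def)
      also have "y k j * cnj (y k j) = complex_of_real (cmod (y k j) powr 2)"
        using yp complex_norm_square[of "y k j"] by (simp add: powr_realpow)
      finally have "y k j * cnj (x k j) = complex_of_real (cmod (y k j) powr 2 * (cmod (y k j) powr (q-2) / N k))"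
        by simp
      also have "cmod (y k j) powr 2 * (cmod (y k j) powr (q-2) / N k) = cmod (y k j) powr q / N k"
      proof -
        have "cmod (y k j) powr 2 * cmod (y k j) powr (q-2) = cmod (y k j) powr (2 + (q-2))"
          by (simp only: powr_add)
        thus ?thesis by simp
      qed
      finally show ?thesis .
    qed
    have xU: "x \<in> U"
    proof -
      have "vec_norm p (n k) (x k) = 1" if k: "k < r" for k
      proof -
        have "(\<Sum>j<n k. cmod (x k j) powr p) = (\<Sum>j<n k. cmod (y k j) powr q) / c k"
          using ax[OF k] by (simp add: sum_divide_distrib)
        also have "\<dots> = 1" using cp[OF k] by (simp add: c_def)
        finally show ?thesis by (simp add: vec_norm_def)
      qed
      thus ?thesis by (simp add: U_def)
    qed
    have "FF r n A x = cmod (\<Sum>i\<in>rindex r n. \<Prod>k<r. y k (i k) * cnj (x k (i k)))"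
      unfolding FF_def using y by (intro arg_cong[where f=cmod] sum.cong) (auto simp: prod.distrib)
    also have "\<dots> = cmod (\<Prod>k<r. \<Sum>j<n k. y k j * cnj (x k j))"
      using prod_sum_rindex[of "\<lambda>k j. y k j * cnj (x k j)" r n] by simp
    also have "\<dots> = cmod (\<Prod>k<r. complex_of_real (c k / N k))"
      by (simp add: bx c_def sum_divide_distrib)
    also have "\<dots> = (\<Prod>k<r. c k / N k)"
      using cp Np by (auto simp: prod_norm[symmetric] norm_divide less_imp_le intro!: prod.cong)
    also have "\<dots> = (\<Prod>k<r. c k powr (1/q))"
    proof (intro prod.cong refl)
      fix k assume "k \<in> {..<r}"
      hence ck: "c k > 0" using cp by simp
      have "c k / N k = c k powr 1 / c k powr (1/p)" using ck by (simp add: N_def)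
      also have "\<dots> = c k powr (1 - 1/p)" by (simp add: powr_diff)
      also have "1 - 1/p = 1/q" using pq by simp
      finally show "c k / N k = c k powr (1/q)" .
    qed
    also have "\<dots> = entry_norm r n (p/(p-1)) A" using K by (simp add: prod_powr_distrib)
    finally have "entry_norm r n (p/(p-1)) A = FF r n A x" by simp
    also have "\<dots> \<le> Sup V" using xU Vb by (auto simp: V_def intro: cSup_upper)
    finally show ?thesis using SV by simp
  qed
qed



lemma eq_rank_one:
  assumes p: "p > 1" and r: "r \<ge> 1" and n: "\<forall>k<r. n k \<ge> 1"
    and eq: "spec_norm r n p A = entry_norm r n (p/(p-1)) A"
  shows "rank_one r n A"
proof -
  define q where "q = p/(p-1)"
  have q1: "q > 1" and pq: "1/p + 1/q = 1" and pdq: "p / q = p - 1"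
    using pq_facts[OF p] by (simp_all add: q_def)
  define K where "K = entry_norm r n q A"
  have K_def': "K = (\<Sum>i\<in>rindex r n. cmod (A i) powr q) powr (1/q)"
    by (simp add: K_def entry_norm_def)
  have K0: "K \<ge> 0" by (simp add: K_def')
  show ?thesis
  proof (cases "K = 0")
    case True
    hence "(\<Sum>i\<in>rindex r n. cmod (A i) powr q) = 0" by (simp add: K_def')
    hence "\<forall>i\<in>rindex r n. cmod (A i) powr q = 0"
      by (subst (asm) sum_nonneg_eq_0_iff) (auto simp: finite_rindex)
    hence "\<forall>i\<in>rindex r n. A i = (\<Prod>k<r. (\<lambda>k j. 0::complex) k (i k))"
      using r by simp
    thus ?thesis unfolding rank_one_def by (intro exI[of _ "\<lambda>k j. 0"]) simp
  next
    case False
    hence Kp: "K > 0" using K0 by simp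
    obtain xL where xL: "\<forall>k<r. vec_norm p (n k) (xL k) = 1" and FxL: "FF r n A xL = spec_norm r n p A"
      using attained[OF p n] by blast
    define X where "X i = (\<Prod>k<r. xL k (i k))" for i
    define b where "b i = cmod (X i)" for i
    define z where "z i = A i * cnj (X i)" for i
    have zalt: "A i * (\<Prod>k<r. cnj (xL k (i k))) = z i" for i by (simp add: z_def X_def cnj_prod)
    have cz: "cmod (z i) = cmod (A i) * b i" for i by (simp add: z_def b_def norm_mult)
    have bsum: "(\<Sum>i\<in>rindex r n. b i powr p) = 1"
      using bsum_one[OF p xL] by (simp add: b_def X_def prod_norm)
    have H1: "(\<Sum>i\<in>rindex r n. cmod (A i) * b i) \<le> K"
      using holder_young(1)[OF finite_rindex, where p=p and q=q and a="\<lambda>i. cmod (A i)" and b=b]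
        p q1 pq bsum by (auto simp: b_def K_def')
    have SK: "cmod (\<Sum>i\<in>rindex r n. z i) = K"
      using FxL eq by (simp add: FF_def zalt K_def q_def)
    have T: "cmod (\<Sum>i\<in>rindex r n. z i) \<le> (\<Sum>i\<in>rindex r n. cmod (z i))" by (rule norm_sum)
    have E1: "(\<Sum>i\<in>rindex r n. cmod (A i) * b i) = K"
      using H1 T SK cz by simp
    have E2: "cmod (\<Sum>i\<in>rindex r n. z i) = (\<Sum>i\<in>rindex r n. cmod (z i))"
      using E1 SK cz by simp
    have H2: "\<forall>i\<in>rindex r n. (cmod (A i) / K) powr q = b i powr p"
      using holder_young(2)[OF finite_rindex, where p=p and q=q and a="\<lambda>i. cmod (A i)" and b=b]
        p q1 pq bsum E1 Kp by (auto simp: b_def K_def')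
    have AK: "cmod (A i) = K * b i powr (p-1)" if i: "i \<in> rindex r n" for i
    proof -
      have "cmod (A i) / K = ((cmod (A i) / K) powr q) powr (1/q)"
        using q1 Kp by (simp add: powr_powr)
      also have "\<dots> = (b i powr p) powr (1/q)" using H2 i by simp
      also have "\<dots> = b i powr (p-1)" using pdq by (simp add: powr_powr)
      finally show ?thesis using Kp by (simp add: field_simps)
    qed
    have "(\<Sum>i\<in>rindex r n. z i) \<noteq> 0" using SK Kp by auto
    then obtain w where w1: "cmod w = 1" and wz: "\<forall>i\<in>rindex r n. z i = w * complex_of_real (cmod (z i))"
      using phase_align[OF finite_rindex E2] by blast
    have Aform: "A i = w * complex_of_real K * (X i * complex_of_real (b i powr (p-2)))"
      if i: "i \<in> rindex r n" for i
    proof (cases "b i = 0")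
      case True
      hence "cmod (A i) = 0" using AK[OF i] p by simp
      moreover have "X i = 0" using True by (simp add: b_def)
      ultimately show ?thesis by simp
    next
      case False
      hence bp: "b i > 0" by (simp add: b_def)
      have XX: "cnj (X i) * X i = complex_of_real (b i * b i)"
        using complex_norm_square[of "X i"] by (simp add: b_def power2_eq_square mult.commute)
      have "z i * X i = A i * (cnj (X i) * X i)" by (simp add: z_def mult.assoc)
      hence "A i * complex_of_real (b i * b i) = z i * X i" by (simp only: XX)
      also have "\<dots> = w * complex_of_real (cmod (A i) * b i) * X i" using wz i cz by simp
      also have "\<dots> = w * complex_of_real (K * (b i powr (p-1) * b i)) * X i" using AK[OF i] by (simp add: mult.assoc)
      also have "b i powr (p-1) * b i = b i powr (p-2) * (b i * b i)"
      proof -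
        have "b i powr (p-1) = b i powr ((p-2) + 1)" by simp
        also have "\<dots> = b i powr (p-2) * b i" using bp by (simp only: powr_add powr_one)
        finally show ?thesis by simp
      qed
      finally have "A i * complex_of_real (b i * b i)
          = (w * complex_of_real K * (X i * complex_of_real (b i powr (p-2)))) * complex_of_real (b i * b i)"
        by (simp add: algebra_simps)
      thus ?thesis using bp by simp
    qed
    define y where "y k j = (if k = 0 then w * complex_of_real K else 1) *
        (xL k j * complex_of_real (cmod (xL k j) powr (p-2)))" for k j
    have "\<forall>i\<in>rindex r n. A i = (\<Prod>k<r. y k (i k))"
    proof
      fix i assume i: "i \<in> rindex r n"
      have "(\<Prod>k<r. y k (i k)) = (\<Prod>k<r. (if k = 0 then w * complex_of_real K else 1)) *
           ((\<Prod>k<r. xL k (i k)) * (\<Prod>k<r. complex_of_real (cmod (xL k (i k)) powr (p-2))))"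
        by (simp add: y_def prod.distrib)
      also have "(\<Prod>k<r. (if k = 0 then w * complex_of_real K else 1)) = w * complex_of_real K"
        using r by (simp add: prod.delta)
      also have "(\<Prod>k<r. complex_of_real (cmod (xL k (i k)) powr (p-2))) = complex_of_real (b i powr (p-2))"
        by (simp add: b_def X_def prod_powr_distrib flip: prod_norm)
      finally show "A i = (\<Prod>k<r. y k (i k))" using Aform[OF i] by (simp add: X_def)
    qed
    thus ?thesis unfolding rank_one_def by blast
  qed
qed

theorem theorem20:
  fixes r :: nat and n :: "nat \<Rightarrow> nat" and p :: real
    and A :: "(nat \<Rightarrow> nat) \<Rightarrow> complex"
  assumes "p > 1" and "r \<ge> 1" and "\<forall>k<r. n k \<ge> 1"
  shows "spec_norm r n p A \<le> entry_norm r n (p / (p - 1)) A \<and>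
         (spec_norm r n p A = entry_norm r n (p / (p - 1)) A \<longleftrightarrow> rank_one r n A)"
proof -
  have le: "spec_norm r n p A \<le> entry_norm r n (p / (p - 1)) A"
    unfolding spec_norm_eq using spec_facts[OF assms(1) assms(3), of A]
    by (intro cSup_least) auto
  moreover have "rank_one r n A \<Longrightarrow> spec_norm r n p A = entry_norm r n (p / (p - 1)) A"
    using le rank_one_lower[OF assms(1) assms(3)] by fastforce
  moreover have "spec_norm r n p A = entry_norm r n (p / (p - 1)) A \<Longrightarrow> rank_one r n A"
    using eq_rank_one[OF assms] by blast
  ultimately show ?thesis by blast
qed

end
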